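(* Let $D$ be an Eulerian digraph (finite, without loops, parallel arcs or digons), let $\mathcal{F}(D)$ be a cycle decomposition of $D$, and let $v\in V(D)$. Let $\mathcal{C}_v\subseteq\mathcal{F}(D)$ be the set of dicycles of $\mathcal{F}(D)$ passing through $v$, and suppose that in the dicycle intersection graph $CI(D)$ associated with $\mathcal{F}(D)$ the set $\mathcal{C}_v$ induces a simple clique corresponding to the single vertex $v$, i.e. any two distinct dicycles in $\mathcal{C}_v$ have $v$ as their unique common vertex. Then $v\in SV(D)$, i.e. $|N^{+2}(v)|\ge|N^{+}(v)|$.
   Context: All digraphs are finite, with no loops, no parallel arcs and no digons (a digon is a pair of arcs $u\to w$, $w\to u$), so every dicycle has length at least $3$. $N^{+}(v)$ is the set of out-neighbours of $v$; $N^{+2}(v)$ is the set of vertices $w\notin N^{+}(v)\cup\{v\}$ such that $u\to w$ is an arc for some $u\in N^{+}(v)$; $SV(D)$ is the set of vertices $v$ with $|N^{+2}(v)|\ge|N^{+}(v)|$. An Eulerian digraph is a (weakly) connected digraph with $d^{+}(x)=d^{-}(x)$ for all vertices $x$. A cycle decomposition $\mathcal{F}(D)$ is a set of dicycles whose arc sets partition $A(D)$. The dicycle intersection graph $CI(D)$ associated with $\mathcal{F}(D)$ is the multigraph with vertex set $\mathcal{F}(D)$ having, for each pair of distinct dicycles $C,C'$ and each vertex of $D$ lying on both, one edge between $C$ and $C'$. *)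

theory Defs
  imports Main
begin

text \<open>A digraph is given by a finite vertex set V and an arc relation A.
  Parallel arcs are excluded by representing arcs as a set of pairs.\<close>

definition digraph :: "'a set \<Rightarrow> ('a \<times> 'a) set \<Rightarrow> bool" where
  "digraph V A \<longleftrightarrow> finite V \<and> A \<subseteq> V \<times> V
     \<and> (\<forall>x. (x, x) \<notin> A)
     \<and> (\<forall>u w. (u, w) \<in> A \<longrightarrow> (w, u) \<notin> A)"

definition weakly_connected :: "'a set \<Rightarrow> ('a \<times> 'a) set \<Rightarrow> bool" where
  "weakly_connected V A \<longleftrightarrow> (\<forall>x\<in>V. \<forall>y\<in>V. (x, y) \<in> (A \<union> A\<inverse>)\<^sup>*)"

definition out_nbrs :: "('a \<times> 'a) set \<Rightarrow> 'a \<Rightarrow> 'a set" where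
  "out_nbrs A v = {w. (v, w) \<in> A}"

definition in_nbrs :: "('a \<times> 'a) set \<Rightarrow> 'a \<Rightarrow> 'a set" where
  "in_nbrs A v = {u. (u, v) \<in> A}"

definition eulerian :: "'a set \<Rightarrow> ('a \<times> 'a) set \<Rightarrow> bool" where
  "eulerian V A \<longleftrightarrow> digraph V A \<and> weakly_connected V A
     \<and> (\<forall>x\<in>V. card (out_nbrs A x) = card (in_nbrs A x))"

definition out2_nbrs :: "('a \<times> 'a) set \<Rightarrow> 'a \<Rightarrow> 'a set" where
  "out2_nbrs A v = {w. w \<notin> out_nbrs A v \<and> w \<noteq> v \<and> (\<exists>u\<in>out_nbrs A v. (u, w) \<in> A)}"

definition SV :: "'a set \<Rightarrow> ('a \<times> 'a) set \<Rightarrow> 'a set" where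
  "SV V A = {v\<in>V. card (out2_nbrs A v) \<ge> card (out_nbrs A v)}"

definition cycle_arcs :: "'a list \<Rightarrow> ('a \<times> 'a) set" where
  "cycle_arcs xs = {(xs ! i, xs ! ((i + 1) mod length xs)) | i. i < length xs}"

definition is_dicycle_list :: "('a \<times> 'a) set \<Rightarrow> 'a list \<Rightarrow> bool" where
  "is_dicycle_list A xs \<longleftrightarrow> distinct xs \<and> length xs \<ge> 3 \<and> cycle_arcs xs \<subseteq> A"

text \<open>A dicycle of D is identified with its arc set.\<close>
definition is_dicycle :: "('a \<times> 'a) set \<Rightarrow> ('a \<times> 'a) set \<Rightarrow> bool" where
  "is_dicycle A C \<longleftrightarrow> (\<exists>xs. is_dicycle_list A xs \<and> C = cycle_arcs xs)"

definition cverts :: "('a \<times> 'a) set \<Rightarrow> 'a set" where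
  "cverts C = fst ` C"

definition cycle_decomposition :: "('a \<times> 'a) set \<Rightarrow> ('a \<times> 'a) set set \<Rightarrow> bool" where
  "cycle_decomposition A F \<longleftrightarrow> (\<forall>C\<in>F. is_dicycle A C) \<and> \<Union>F = A
     \<and> (\<forall>C\<in>F. \<forall>C'\<in>F. C \<noteq> C' \<longrightarrow> C \<inter> C' = {})"

definition cycles_through :: "('a \<times> 'a) set set \<Rightarrow> 'a \<Rightarrow> ('a \<times> 'a) set set" where
  "cycles_through F v = {C\<in>F. v \<in> cverts C}"

end

theory Submission
  imports Defs
begin

lemma ca_mem: "p \<in> cycle_arcs xs \<longleftrightarrow> (\<exists>i<length xs. p = (xs ! i, xs ! ((i + 1) mod length xs)))"
  unfolding cycle_arcs_def by blast

lemma succ_in_cverts: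
  assumes "(w, x) \<in> cycle_arcs xs"
  shows "x \<in> cverts (cycle_arcs xs)"
proof -
  from assms obtain i where i: "i < length xs" "x = xs ! ((i + 1) mod length xs)"
    by (auto simp: ca_mem)
  let ?j = "(i + 1) mod length xs"
  have "?j < length xs" using i by (intro mod_less_divisor) (cases xs, auto)
  hence "(xs ! ?j, xs ! ((?j + 1) mod length xs)) \<in> cycle_arcs xs" by (auto simp: ca_mem)
  thus ?thesis using i unfolding cverts_def by force
qed

lemma out_unique:
  assumes "distinct xs" "(v, w) \<in> cycle_arcs xs" "(v, w') \<in> cycle_arcs xs"
  shows "w = w'"
proof -
  from assms(2) obtain i where i: "i < length xs" "v = xs ! i" "w = xs ! ((i + 1) mod length xs)"
    by (auto simp: ca_mem)
  from assms(3) obtain j where j: "j < length xs" "v = xs ! j" "w' = xs ! ((j + 1) mod length xs)"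
    by (auto simp: ca_mem)
  have "i = j" using i j assms(1) by (simp add: nth_eq_iff_index_eq)
  thus ?thesis using i j by simp
qed

lemma next_ne:
  assumes "distinct xs" "length xs \<ge> 3" "(v, w) \<in> cycle_arcs xs"
  shows "\<exists>x. (w, x) \<in> cycle_arcs xs \<and> x \<noteq> v"
proof -
  let ?n = "length xs"
  from assms(3) obtain i where i: "i < ?n" "v = xs ! i" "w = xs ! ((i + 1) mod ?n)"
    by (auto simp: ca_mem)
  let ?j = "(i + 1) mod ?n"
  let ?k = "(?j + 1) mod ?n"
  have j: "?j < ?n" using i by (intro mod_less_divisor) (cases xs, auto)
  have k: "?k < ?n" using i by (intro mod_less_divisor) (cases xs, auto)
  have kk: "?k = (i + 2) mod ?n" by (simp add: mod_Suc_eq)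
  have "?k \<noteq> i"
  proof
    assume "?k = i"
    have n3: "?n \<ge> 3" using assms(2) .
    show False
    proof (cases "i + 2 < ?n")
      case True
      then show False using \<open>?k = i\<close> kk by simp
    next
      case False
      hence "(i + 2) mod ?n = i + 2 - ?n" using i n3 by (simp add: mod_if)
      thus False using \<open>?k = i\<close> kk n3 False by simp
    qed
  qed
  hence "xs ! ?k \<noteq> v" using i k assms(1) by (simp add: nth_eq_iff_index_eq)
  moreover have "(w, xs ! ?k) \<in> cycle_arcs xs" using j i by (auto simp: ca_mem)
  ultimately show ?thesis by blast
qed

theorem mainTheorem5:
  fixes V :: "'a set" and A :: "('a \<times> 'a) set" and F :: "('a \<times> 'a) set set" and v :: 'a
  assumes "eulerian V A"
    and "cycle_decomposition A F"
    and "v \<in> V"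
    and "\<forall>C\<in>cycles_through F v. \<forall>C'\<in>cycles_through F v.
            C \<noteq> C' \<longrightarrow> cverts C \<inter> cverts C' = {v}"
  shows "v \<in> SV V A"
proof -
  have dg: "digraph V A" using assms(1) unfolding eulerian_def by blast
  have fin: "finite V" and AV: "A \<subseteq> V \<times> V" and irr: "\<And>x. (x, x) \<notin> A"
    using dg unfolding digraph_def by blast+
  have dic: "\<And>C. C \<in> F \<Longrightarrow> is_dicycle A C" and un: "\<Union>F = A"
    using assms(2) unfolding cycle_decomposition_def by blast+
  have cyc: "\<exists>C\<in>F. (v, w) \<in> C" if "w \<in> out_nbrs A v" for w
    using that un unfolding out_nbrs_def by blast
  define Cw where "Cw w = (SOME C. C \<in> F \<and> (v, w) \<in> C)" for w
  have Cw: "Cw w \<in> F \<and> (v, w) \<in> Cw w" if "w \<in> out_nbrs A v" for w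
    using cyc[OF that] unfolding Cw_def by (metis (mono_tags, lifting) someI_ex)
  have thr: "Cw w \<in> cycles_through F v" if "w \<in> out_nbrs A v" for w
    using Cw[OF that] unfolding cycles_through_def cverts_def by force
  have nx: "\<exists>x. (w, x) \<in> Cw w \<and> x \<noteq> v" if wo: "w \<in> out_nbrs A v" for w
  proof -
    obtain xs where xs: "is_dicycle_list A xs" "Cw w = cycle_arcs xs"
      using dic[of "Cw w"] Cw[OF wo] unfolding is_dicycle_def by blast
    have "\<exists>x. (w, x) \<in> cycle_arcs xs \<and> x \<noteq> v"
      by (rule next_ne) (use xs Cw[OF wo] in \<open>auto simp: is_dicycle_list_def\<close>)
    thus ?thesis using xs by simp
  qed
  define f where "f w = (SOME x. (w, x) \<in> Cw w \<and> x \<noteq> v)" for w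
  have f: "(w, f w) \<in> Cw w \<and> f w \<noteq> v" if "w \<in> out_nbrs A v" for w
    using nx[OF that] unfolding f_def by (metis (mono_tags, lifting) someI_ex)
  have vert: "y \<in> cverts C" if CF: "C \<in> F" "(z, y) \<in> C" for C z y
  proof -
    obtain xs where "C = cycle_arcs xs" using dic[OF CF(1)] unfolding is_dicycle_def by blast
    thus ?thesis using succ_in_cverts[of z y xs] CF(2) by simp
  qed
  have ou: "w = w'" if CF: "C \<in> F" "(u, w) \<in> C" "(u, w') \<in> C" for C u w w'
  proof -
    obtain xs where xs: "is_dicycle_list A xs" "C = cycle_arcs xs"
      using dic[OF CF(1)] unfolding is_dicycle_def by blast
    show ?thesis by (rule out_unique[of xs u]) (use xs CF in \<open>auto simp: is_dicycle_list_def\<close>)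
  qed
  have inj: "inj_on f (out_nbrs A v)"
  proof (rule inj_onI)
    fix w w' assume w: "w \<in> out_nbrs A v" and w': "w' \<in> out_nbrs A v" and e: "f w = f w'"
    have "Cw w = Cw w'"
    proof (rule ccontr)
      assume "Cw w \<noteq> Cw w'"
      hence "cverts (Cw w) \<inter> cverts (Cw w') = {v}" using assms(4) thr w w' by blast
      moreover have "f w \<in> cverts (Cw w)" using vert Cw[OF w] f[OF w] by blast
      moreover have "f w \<in> cverts (Cw w')" using vert[of "Cw w'" w' "f w'"] Cw[OF w'] f[OF w'] e by simp
      ultimately show False using f[OF w] by blast
    qed
    thus "w = w'" using ou[of "Cw w" v w w'] Cw[OF w] Cw[OF w'] by simp
  qed
  have img: "f ` out_nbrs A v \<subseteq> out2_nbrs A v"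
  proof
    fix y assume "y \<in> f ` out_nbrs A v"
    then obtain w where w: "w \<in> out_nbrs A v" and y: "y = f w" by blast
    have wy: "(w, y) \<in> A" using f[OF w] Cw[OF w] un y by blast
    have "y \<notin> out_nbrs A v"
    proof
      assume "y \<in> out_nbrs A v"
      then obtain C' where C': "C' \<in> F" "(v, y) \<in> C'" using cyc by blast
      show False
      proof (cases "C' = Cw w")
        case True
        hence "y = w" using ou[of C' v y w] C' Cw[OF w] by simp
        thus False using wy irr by simp
      next
        case False
        have t: "C' \<in> cycles_through F v" using C' unfolding cycles_through_def cverts_def by force
        hence "cverts C' \<inter> cverts (Cw w) = {v}" using assms(4) thr[OF w] False by blast
        moreover have "y \<in> cverts C'" using vert C' by blast
        moreover have "y \<in> cverts (Cw w)" using vert Cw[OF w] f[OF w] y by blast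
        ultimately show False using f[OF w] y by blast
      qed
    qed
    thus "y \<in> out2_nbrs A v" using w wy f[OF w] y unfolding out2_nbrs_def by blast
  qed
  have "finite (out2_nbrs A v)"
    by (rule finite_subset[OF _ fin]) (use AV in \<open>auto simp: out2_nbrs_def\<close>)
  hence "card (out_nbrs A v) \<le> card (out2_nbrs A v)"
    using card_inj_on_le[OF inj img] by blast
  thus ?thesis using assms(3) unfolding SV_def by blast
qed

end
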